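(* Consider any learner in the $K$-armed bandit setting described in the context, and suppose the self-bounding condition holds with gap vector $\Delta$ and constant $C$. Then for every $x>0$ and every $z>0$, $$\mathbb{S}_1(x)\le z(\mathrm{Reg}^T+C)+\frac{1}{z}\cdot\frac{x}{4\Delta_{\min}},\qquad \mathbb{S}_2(x)\le z(\mathrm{Reg}^T+C)+\frac{1}{z}\sum_{i\in V}\frac{x}{4\Delta_i}.$$
   Context: Bandit setting: in round $t=1,\dots,T$ the learner picks $i^t\in[K]$ from a distribution $p^t$ (determined by the history before round $t$, so $\Pr[i^t=i]=\mathbb{E}[p^t_i]$), the environment picks $\ell^t\in[0,1]^K$; $\mathrm{Reg}^T=\mathbb{E}[\sum_t\ell^t_{i^t}-\sum_t\ell^t_{i^\star}]$ with $i^\star\in\arg\min_i\mathbb{E}[\sum_t\ell^t_i]$. Self-bounding condition: there exist $\Delta\in[0,1]^K$, $C\ge0$ with $\mathrm{Reg}^T\ge\mathbb{E}[\sum_{t}\sum_{i}\Pr[i^t=i]\Delta_i]-C$; $U=\{i:\Delta_i=0\}$, $V=[K]\setminus U$ (assumed nonempty), $\Delta_{\min}=\min_{i\in V}\Delta_i$. Self-bounding quantities: $\mathbb{S}_1(x)=\mathbb{E}\big[\sqrt{x\sum_{t=1}^T\sum_{i\in V}p^t_i}\big]$ and $\mathbb{S}_2(x)=\mathbb{E}\big[\sum_{i\in V}\sqrt{x\sum_{t=1}^Tp^t_i}\big]$. *)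

theory Defs
  imports "HOL-Probability.Probability"
begin

text \<open>Bandit setting over a probability space M (all randomness of learner and environment).
Rounds are 1..T, arms are 1..K.
  p t i w : probability the learner assigns to arm i in round t (random, history dependent);
  I t w   : arm played in round t;
  l t i w : loss of arm i in round t.\<close>

definition bandit_regret ::
  "'a measure \<Rightarrow> nat \<Rightarrow> (nat \<Rightarrow> 'a \<Rightarrow> nat) \<Rightarrow> (nat \<Rightarrow> nat \<Rightarrow> 'a \<Rightarrow> real) \<Rightarrow> nat \<Rightarrow> real" where
  "bandit_regret M T I l istar =
     (\<integral>w. (\<Sum>t=1..T. l t (I t w) w) \<partial>M) - (\<integral>w. (\<Sum>t=1..T. l t istar w) \<partial>M)"

definition S1 ::
  "'a measure \<Rightarrow> nat \<Rightarrow> nat set \<Rightarrow> (nat \<Rightarrow> nat \<Rightarrow> 'a \<Rightarrow> real) \<Rightarrow> real \<Rightarrow> real" where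
  "S1 M T V p x = (\<integral>w. sqrt (x * (\<Sum>t=1..T. \<Sum>i\<in>V. p t i w)) \<partial>M)"

definition S2 ::
  "'a measure \<Rightarrow> nat \<Rightarrow> nat set \<Rightarrow> (nat \<Rightarrow> nat \<Rightarrow> 'a \<Rightarrow> real) \<Rightarrow> real \<Rightarrow> real" where
  "S2 M T V p x = (\<integral>w. (\<Sum>i\<in>V. sqrt (x * (\<Sum>t=1..T. p t i w))) \<partial>M)"

end

theory Submission
  imports Defs
begin

lemma amgm: fixes x z c a :: real assumes "0<x" "0<z" "0<c" "0\<le>a"
  shows "sqrt (x*a) \<le> z*c*a + x/(4*z*c)"
proof -
  define u where "u = sqrt (z*c*a)"
  define v where "v = sqrt (x/(4*z*c))"
  have sq: "(u - v)^2 \<ge> 0" by simp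
  have uv: "u * v = sqrt ((z*c*a) * (x/(4*z*c)))"
    unfolding u_def v_def by (rule real_sqrt_mult[symmetric])
  have e: "(z*c*a) * (x/(4*z*c)) = (x*a)/4" using assms by (simp add: field_simps)
  have f: "sqrt ((x*a)/4) = sqrt (x*a)/2" by (simp add: real_sqrt_divide)
  have uv2: "u * v = sqrt (x*a)/2" using uv by (simp only: e f)
  have u2: "u^2 = z*c*a" unfolding u_def using assms by simp
  have v2: "v^2 = x/(4*z*c)" unfolding v_def using assms by simp
  have "(u - v)^2 = u^2 + v^2 - 2 * (u * v)" by (simp add: power2_diff)
  with sq u2 v2 uv2 show ?thesis by simp
qed

theorem lemma3:
  fixes M :: "'a measure" and K T :: nat
    and p :: "nat \<Rightarrow> nat \<Rightarrow> 'a \<Rightarrow> real"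
    and I :: "nat \<Rightarrow> 'a \<Rightarrow> nat"
    and l :: "nat \<Rightarrow> nat \<Rightarrow> 'a \<Rightarrow> real"
    and istar :: nat
    and \<Delta> :: "nat \<Rightarrow> real" and C :: real
    and x z :: real
  assumes M: "prob_space M"
    and p_meas: "\<And>t i. t \<in> {1..T} \<Longrightarrow> i \<in> {1..K} \<Longrightarrow> p t i \<in> borel_measurable M"
    and p_nonneg: "\<And>t i w. t \<in> {1..T} \<Longrightarrow> i \<in> {1..K} \<Longrightarrow> w \<in> space M \<Longrightarrow> 0 \<le> p t i w"
    and p_sum: "\<And>t w. t \<in> {1..T} \<Longrightarrow> w \<in> space M \<Longrightarrow> (\<Sum>i=1..K. p t i w) = 1"
    and I_meas: "\<And>t. t \<in> {1..T} \<Longrightarrow> I t \<in> measurable M (count_space UNIV)"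
    and I_range: "\<And>t w. t \<in> {1..T} \<Longrightarrow> w \<in> space M \<Longrightarrow> I t w \<in> {1..K}"
    and I_prob: "\<And>t i. t \<in> {1..T} \<Longrightarrow> i \<in> {1..K} \<Longrightarrow>
                   measure M {w \<in> space M. I t w = i} = (\<integral>w. p t i w \<partial>M)"
    and l_meas: "\<And>t i. t \<in> {1..T} \<Longrightarrow> i \<in> {1..K} \<Longrightarrow> l t i \<in> borel_measurable M"
    and l_range: "\<And>t i w. t \<in> {1..T} \<Longrightarrow> i \<in> {1..K} \<Longrightarrow> w \<in> space M \<Longrightarrow>
                   0 \<le> l t i w \<and> l t i w \<le> 1"
    and istar: "istar \<in> {1..K}"
    and istar_min: "\<And>i. i \<in> {1..K} \<Longrightarrow>
                   (\<integral>w. (\<Sum>t=1..T. l t istar w) \<partial>M) \<le> (\<integral>w. (\<Sum>t=1..T. l t i w) \<partial>M)"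
    and Delta_range: "\<And>i. i \<in> {1..K} \<Longrightarrow> 0 \<le> \<Delta> i \<and> \<Delta> i \<le> 1"
    and C_nonneg: "0 \<le> C"
    and self_bounding: "bandit_regret M T I l istar \<ge>
          (\<Sum>t=1..T. \<Sum>i=1..K. measure M {w \<in> space M. I t w = i} * \<Delta> i) - C"
    and V_nonempty: "{i \<in> {1..K}. \<Delta> i \<noteq> 0} \<noteq> {}"
    and x_pos: "0 < x" and z_pos: "0 < z"
  shows "S1 M T {i \<in> {1..K}. \<Delta> i \<noteq> 0} p x \<le>
           z * (bandit_regret M T I l istar + C)
           + (1 / z) * (x / (4 * Min (\<Delta> ` {i \<in> {1..K}. \<Delta> i \<noteq> 0})))
       \<and> S2 M T {i \<in> {1..K}. \<Delta> i \<noteq> 0} p x \<le>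
           z * (bandit_regret M T I l istar + C)
           + (1 / z) * (\<Sum>i \<in> {i \<in> {1..K}. \<Delta> i \<noteq> 0}. x / (4 * \<Delta> i))"
proof -
  interpret prob_space M by (rule M)
  define V where "V = {i \<in> {1..K}. \<Delta> i \<noteq> 0}"
  define D where "D = Min (\<Delta> ` V)"
  define R where "R = bandit_regret M T I l istar"
  have finV: "finite V" and VK: "V \<subseteq> {1..K}" unfolding V_def by auto
  have Dpos: "\<And>i. i \<in> V \<Longrightarrow> 0 < \<Delta> i" using Delta_range unfolding V_def by force
  have DV: "D \<in> \<Delta> ` V" unfolding D_def using finV V_nonempty V_def by (intro Min_in) auto
  have Dle: "\<And>i. i \<in> V \<Longrightarrow> D \<le> \<Delta> i" unfolding D_def using finV by auto
  have D0: "0 < D" using DV Dpos by auto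
  have ple1: "p t i w \<le> 1" if "t \<in> {1..T}" "i \<in> {1..K}" "w \<in> space M" for t i w
  proof -
    have "p t i w \<le> (\<Sum>j=1..K. p t j w)"
      by (rule member_le_sum) (use that p_nonneg in auto)
    thus ?thesis using p_sum that by simp
  qed
  have pint: "integrable M (p t i)" if "t \<in> {1..T}" "i \<in> {1..K}" for t i
    by (rule integrable_const_bound[where B=1]) (use that p_meas p_nonneg ple1 in auto)
  have pintV: "integrable M (p t i)" if "t \<in> {1..T}" "i \<in> V" for t i
    using pint that VK by auto
  define E where "E t i = (\<integral>w. p t i w \<partial>M)" for t i
  have E0: "0 \<le> E t i" if "t \<in> {1..T}" "i \<in> {1..K}" for t i
    unfolding E_def using that p_nonneg by (intro integral_nonneg_AE) auto
  have key: "(\<Sum>t=1..T. \<Sum>i\<in>V. \<Delta> i * E t i) \<le> R + C"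
  proof -
    have "(\<Sum>t=1..T. \<Sum>i\<in>V. \<Delta> i * E t i) = (\<Sum>t=1..T. \<Sum>i=1..K. \<Delta> i * E t i)"
    proof (rule sum.cong[OF refl])
      fix t show "(\<Sum>i\<in>V. \<Delta> i * E t i) = (\<Sum>i=1..K. \<Delta> i * E t i)"
        by (rule sum.mono_neutral_left) (auto simp: V_def)
    qed
    also have "\<dots> = (\<Sum>t=1..T. \<Sum>i=1..K. measure M {w \<in> space M. I t w = i} * \<Delta> i)"
      using I_prob by (intro sum.cong refl) (auto simp: E_def)
    finally show ?thesis using self_bounding unfolding R_def by linarith
  qed
  have s_int: "(\<integral>w. (\<Sum>t=1..T. \<Sum>i\<in>V. c i * p t i w) \<partial>M) = (\<Sum>t=1..T. \<Sum>i\<in>V. c i * E t i)" for c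
  proof -
    have "(\<integral>w. (\<Sum>t=1..T. \<Sum>i\<in>V. c i * p t i w) \<partial>M) = (\<Sum>t=1..T. \<integral>w. (\<Sum>i\<in>V. c i * p t i w) \<partial>M)"
      by (rule Bochner_Integration.integral_sum[where f="\<lambda>t w. \<Sum>i\<in>V. c i * p t i w"]) (use pintV in \<open>auto intro!: Bochner_Integration.integrable_sum Bochner_Integration.integrable_mult_right\<close>)
    also have "\<dots> = (\<Sum>t=1..T. \<Sum>i\<in>V. c i * E t i)"
      using pintV by (intro sum.cong refl, subst Bochner_Integration.integral_sum) (auto simp: E_def)
    finally show ?thesis .
  qed
  have s_intg: "integrable M (\<lambda>w. (\<Sum>t=1..T. \<Sum>i\<in>V. c i * p t i w) + b)" for c b
    using pintV by (auto intro!: Bochner_Integration.integrable_add Bochner_Integration.integrable_sum Bochner_Integration.integrable_mult_right)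
  have pV0: "\<And>t i w. t \<in> {1..T} \<Longrightarrow> i \<in> V \<Longrightarrow> w \<in> space M \<Longrightarrow> 0 \<le> p t i w"
    using VK p_nonneg by auto
  have part1: "S1 M T V p x \<le> z * (R + C) + (1 / z) * (x / (4 * D))"
  proof -
    have "S1 M T V p x \<le> (\<integral>w. (\<Sum>t=1..T. \<Sum>i\<in>V. (z*D) * p t i w) + x/(4*z*D) \<partial>M)"
      unfolding S1_def
    proof (rule integral_mono'[OF s_intg])
      fix w assume w: "w \<in> space M"
      have a0: "0 \<le> (\<Sum>t=1..T. \<Sum>i\<in>V. p t i w)" using pV0 w by (intro sum_nonneg) auto
      have "sqrt (x * (\<Sum>t=1..T. \<Sum>i\<in>V. p t i w)) \<le> z*D*(\<Sum>t=1..T. \<Sum>i\<in>V. p t i w) + x/(4*z*D)"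
        by (rule amgm[OF x_pos z_pos D0 a0])
      also have "z*D*(\<Sum>t=1..T. \<Sum>i\<in>V. p t i w) = (\<Sum>t=1..T. \<Sum>i\<in>V. (z*D) * p t i w)"
        by (simp add: sum_distrib_left)
      finally show "sqrt (x * (\<Sum>t=1..T. \<Sum>i\<in>V. p t i w)) \<le> (\<Sum>t=1..T. \<Sum>i\<in>V. (z*D) * p t i w) + x/(4*z*D)" .
      show "0 \<le> (\<Sum>t=1..T. \<Sum>i\<in>V. (z*D) * p t i w) + x/(4*z*D)"
        using pV0 w D0 z_pos x_pos by (intro add_nonneg_nonneg sum_nonneg mult_nonneg_nonneg) auto
    qed
    also have "\<dots> = (\<Sum>t=1..T. \<Sum>i\<in>V. (z*D) * E t i) + x/(4*z*D)"
      using s_int[of "\<lambda>_. z*D"] pintV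
      by (subst Bochner_Integration.integral_add) (auto simp: prob_space.prob_space[OF M] intro!: Bochner_Integration.integrable_sum Bochner_Integration.integrable_mult_right)
    also have "(\<Sum>t=1..T. \<Sum>i\<in>V. (z*D) * E t i) \<le> (\<Sum>t=1..T. \<Sum>i\<in>V. z * (\<Delta> i * E t i))"
    proof (intro sum_mono)
      fix t i assume t: "t \<in> {1..T}" and i: "i \<in> V"
      have "0 \<le> E t i" using E0 t i VK by auto
      hence "D * E t i \<le> \<Delta> i * E t i" using Dle[OF i] by (rule mult_right_mono[rotated])
      thus "z * D * E t i \<le> z * (\<Delta> i * E t i)" using z_pos
        by (simp add: mult.assoc mult_left_mono)
    qed
    also have "\<dots> = z * (\<Sum>t=1..T. \<Sum>i\<in>V. \<Delta> i * E t i)" by (simp add: sum_distrib_left)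
    also have "\<dots> \<le> z * (R + C)" using key z_pos by (intro mult_left_mono) auto
    finally show ?thesis by (simp add: field_simps)
  qed
  have part2: "S2 M T V p x \<le> z * (R + C) + (1 / z) * (\<Sum>i\<in>V. x / (4 * \<Delta> i))"
  proof -
    have "S2 M T V p x \<le> (\<integral>w. (\<Sum>t=1..T. \<Sum>i\<in>V. (z*\<Delta> i) * p t i w) + (\<Sum>i\<in>V. x/(4*z*\<Delta> i)) \<partial>M)"
      unfolding S2_def
    proof (rule integral_mono'[OF s_intg])
      fix w assume w: "w \<in> space M"
      have "(\<Sum>i\<in>V. sqrt (x * (\<Sum>t=1..T. p t i w))) \<le> (\<Sum>i\<in>V. z*\<Delta> i*(\<Sum>t=1..T. p t i w) + x/(4*z*\<Delta> i))"
      proof (rule sum_mono)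
        fix i assume i: "i \<in> V"
        have a0: "0 \<le> (\<Sum>t=1..T. p t i w)" using pV0 w i by (intro sum_nonneg) auto
        show "sqrt (x * (\<Sum>t=1..T. p t i w)) \<le> z*\<Delta> i*(\<Sum>t=1..T. p t i w) + x/(4*z*\<Delta> i)"
          by (rule amgm[OF x_pos z_pos Dpos[OF i] a0])
      qed
      also have "\<dots> = (\<Sum>t=1..T. \<Sum>i\<in>V. (z*\<Delta> i) * p t i w) + (\<Sum>i\<in>V. x/(4*z*\<Delta> i))"
        by (simp add: sum.distrib sum_distrib_left sum.swap[of _ V])
      finally show "(\<Sum>i\<in>V. sqrt (x * (\<Sum>t=1..T. p t i w))) \<le> (\<Sum>t=1..T. \<Sum>i\<in>V. (z*\<Delta> i) * p t i w) + (\<Sum>i\<in>V. x/(4*z*\<Delta> i))" .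
      show "0 \<le> (\<Sum>t=1..T. \<Sum>i\<in>V. (z*\<Delta> i) * p t i w) + (\<Sum>i\<in>V. x/(4*z*\<Delta> i))"
        using pV0 w Dpos z_pos x_pos less_imp_le[OF Dpos]
        by (intro add_nonneg_nonneg sum_nonneg mult_nonneg_nonneg divide_nonneg_pos) (auto simp: less_imp_le)
    qed
    also have "\<dots> = (\<Sum>t=1..T. \<Sum>i\<in>V. (z*\<Delta> i) * E t i) + (\<Sum>i\<in>V. x/(4*z*\<Delta> i))"
      using s_int[of "\<lambda>i. z*\<Delta> i"] pintV
      by (subst Bochner_Integration.integral_add) (auto simp: prob_space.prob_space[OF M] intro!: Bochner_Integration.integrable_sum Bochner_Integration.integrable_mult_right)
    also have "(\<Sum>t=1..T. \<Sum>i\<in>V. (z*\<Delta> i) * E t i) = z * (\<Sum>t=1..T. \<Sum>i\<in>V. \<Delta> i * E t i)"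
      by (simp add: sum_distrib_left mult.assoc)
    also have "\<dots> \<le> z * (R + C)" using key z_pos by (intro mult_left_mono) auto
    also have "(\<Sum>i\<in>V. x/(4*z*\<Delta> i)) = (1/z) * (\<Sum>i\<in>V. x / (4 * \<Delta> i))"
      by (simp add: sum_distrib_left field_simps)
    finally show ?thesis by simp
  qed
  show ?thesis using part1 part2 unfolding V_def D_def R_def by simp
qed

end
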